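(* Let $P(s),C(s)$ be $n\times n$ real rational proper transfer function matrices with no poles in the closed right half-plane, such that the feedback system of $P$ and $C$ is well-posed. If $\theta_\infty(P)+\theta_\infty(C)<\pi$, then the feedback system is stable, i.e., $(I+C(s)P(s))^{-1}$ is proper with no poles in the closed right half-plane.
   Context: For a nonzero $A\in\mathbb{C}^{n\times n}$, $\theta(A)\in[0,\pi]$ is defined by $\cos\theta(A)=\inf\{\mathrm{Re}(x^*Ax)/(|x|\,|Ax|):0\ne x\in\mathbb{C}^n,\ Ax\ne0\}$, and $\theta(0):=0$. The $\mathcal{H}_\infty$ singular angle of $P$ is $\theta_\infty(P)=\sup_{\omega\in[-\infty,\infty]}\theta(P(j\omega))$, with $P(j\pm\infty)=\lim_{\omega\to\pm\infty}P(j\omega)$. The feedback system (with $u_1=e_1-y_2$, $u_2=e_2+y_1$, $y_1=Pu_1$, $y_2=Cu_2$) is well-posed if $(I+C(s)P(s))^{-1}$ exists and is proper, and stable iff $(I+C(s)P(s))^{-1}$ is proper with no poles in the closed right half-plane. *)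

theory Defs
  imports "HOL-Analysis.Analysis" "HOL-Computational_Algebra.Polynomial_Factorial"
          "HOL-Computational_Algebra.Normalized_Fraction" "HOL-Computational_Algebra.Field_as_Ring"
begin

text \<open>Real rational functions are elements of the field of fractions of real polynomials.
  Each one has a unique coprime representation num/den with normalized denominator
  (given by quot_of_fract).\<close>

definition rnum :: "real poly fract \<Rightarrow> real poly" where
  "rnum f = fst (quot_of_fract f)"

definition rden :: "real poly fract \<Rightarrow> real poly" where
  "rden f = snd (quot_of_fract f)"

definition rat_proper :: "real poly fract \<Rightarrow> bool" where
  "rat_proper f \<longleftrightarrow> degree (rnum f) \<le> degree (rden f)"

definition rat_pole :: "real poly fract \<Rightarrow> complex \<Rightarrow> bool" where
  "rat_pole f s \<longleftrightarrow> poly (map_poly complex_of_real (rden f)) s = 0"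

definition rat_eval :: "real poly fract \<Rightarrow> complex \<Rightarrow> complex" where
  "rat_eval f s = poly (map_poly complex_of_real (rnum f)) s / poly (map_poly complex_of_real (rden f)) s"

definition tf_eval :: "real poly fract ^'n^'m \<Rightarrow> complex \<Rightarrow> complex^'n^'m" where
  "tf_eval G s = (\<chi> i j. rat_eval (G $ i $ j) s)"

definition tf_proper :: "real poly fract ^'n^'m \<Rightarrow> bool" where
  "tf_proper G \<longleftrightarrow> (\<forall>i j. rat_proper (G $ i $ j))"

definition tf_poles :: "real poly fract ^'n^'m \<Rightarrow> complex set" where
  "tf_poles G = {s. \<exists>i j. rat_pole (G $ i $ j) s}"

definition tf_no_crhp_poles :: "real poly fract ^'n^'m \<Rightarrow> bool" where
  "tf_no_crhp_poles G \<longleftrightarrow> (\<forall>s. Re s \<ge> 0 \<longrightarrow> \<not> s \<in> tf_poles G)"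

text \<open>Singular angle theta(A) of a complex square matrix.  Re(x^* A x) is written out;
  norm on complex^'n is the Euclidean norm.\<close>
definition sangle :: "complex^'n^'n \<Rightarrow> real" where
  "sangle A = (if A = 0 then 0 else
     arccos (Inf {Re (\<Sum>i\<in>UNIV. cnj (x $ i) * (A *v x) $ i) / (norm x * norm (A *v x)) | x.
                   x \<noteq> 0 \<and> A *v x \<noteq> 0}))"

definition tf_at_pinf :: "real poly fract ^'n^'m \<Rightarrow> complex^'n^'m" where
  "tf_at_pinf G = Lim at_top (\<lambda>\<omega>::real. tf_eval G (\<i> * complex_of_real \<omega>))"

definition tf_at_minf :: "real poly fract ^'n^'m \<Rightarrow> complex^'n^'m" where
  "tf_at_minf G = Lim at_bot (\<lambda>\<omega>::real. tf_eval G (\<i> * complex_of_real \<omega>))"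

text \<open>H-infinity singular angle: sup over omega in the extended real line.\<close>
definition hinf_angle :: "real poly fract ^'n^'n \<Rightarrow> real" where
  "hinf_angle G = Sup ({sangle (tf_eval G (\<i> * complex_of_real \<omega>)) | \<omega>. True}
                       \<union> {sangle (tf_at_pinf G), sangle (tf_at_minf G)})"

definition well_posed :: "real poly fract ^'n^'n \<Rightarrow> real poly fract ^'n^'n \<Rightarrow> bool" where
  "well_posed P C \<longleftrightarrow> invertible (mat 1 + C ** P) \<and> tf_proper (matrix_inv (mat 1 + C ** P))"

end

theory Submission
  imports Defs "HOL-Complex_Analysis.Complex_Analysis"
begin



abbreviation cp :: "real poly \<Rightarrow> complex poly" where "cp p \<equiv> map_poly complex_of_real p"

lemma cp_add: "cp (p + q) = cp p + cp q"
  by (intro poly_eqI) (simp add: coeff_map_poly)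

lemma cp_mult: "cp (p * q) = cp p * cp q"
proof (induction p)
  case 0 show ?case by simp
next
  case (pCons a p)
  have "pCons a p * q = smult a q + pCons 0 (p * q)" by simp
  then show ?case using pCons by (simp add: cp_add map_poly_smult map_poly_pCons)
qed

lemma cp_uminus: "cp (- p) = - cp p"
  by (intro poly_eqI) (simp add: coeff_map_poly)

lemma poly_cp_mult: "poly (cp (p * q)) s = poly (cp p) s * poly (cp q) s"
  by (simp add: cp_mult)
lemma poly_cp_add: "poly (cp (p + q)) s = poly (cp p) s + poly (cp q) s"
  by (simp add: cp_add)
lemma poly_cp_uminus: "poly (cp (- p)) s = - poly (cp p) s"
  by (simp add: cp_uminus)

definition evr :: "complex \<Rightarrow> real poly fract \<Rightarrow> complex \<Rightarrow> bool" where
  "evr s f z \<longleftrightarrow> \<not> rat_pole f s \<and> rat_eval f s = z"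

lemma evr_Fract:
  assumes b: "b \<noteq> 0" and bs: "poly (cp b) s \<noteq> 0"
  shows "evr s (Fract a b) (poly (cp a) s / poly (cp b) s)"
proof -
  define f where "f = Fract a b"
  obtain a' b' where q: "quot_of_fract f = (a', b')" by (cases "quot_of_fract f")
  have fr: "Fract a' b' = f" using Fract_quot_of_fract[of f] q by simp
  have b': "b' \<noteq> 0" using snd_quot_of_fract_nonzero[of f] q by simp
  have cop: "coprime a' b'" using coprime_quot_of_fract[of f] q by simp
  have eq: "a' * b = a * b'" using fr b b' unfolding f_def by (simp add: eq_fract)
  have "b' dvd a' * b" using eq by simp
  then have "b' dvd b" using cop by (metis coprime_commute coprime_dvd_mult_right_iff mult.commute)
  then obtain k where k: "b = b' * k" by (auto elim: dvdE)
  have "poly (cp b) s = poly (cp b') s * poly (cp k) s" using k by (simp add: cp_mult)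
  with bs have b's: "poly (cp b') s \<noteq> 0" by auto
  have "poly (cp (a' * b)) s = poly (cp (a * b')) s" using eq by simp
  then have e2: "poly (cp a') s * poly (cp b) s = poly (cp a) s * poly (cp b') s"
    by (simp add: cp_mult)
  have rn: "rnum f = a'" "rden f = b'" using q by (simp_all add: rnum_def rden_def)
  show ?thesis unfolding f_def[symmetric] evr_def rat_pole_def rat_eval_def rn
    using b's bs e2 by (simp add: field_simps)
qed

lemma fract_repr: "f = Fract (rnum f) (rden f)" "rden f \<noteq> 0"
  by (simp_all add: rnum_def rden_def)

lemma evr_iff: "evr s f z \<longleftrightarrow> poly (cp (rden f)) s \<noteq> 0 \<and> poly (cp (rnum f)) s / poly (cp (rden f)) s = z"
  by (simp add: evr_def rat_pole_def rat_eval_def)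

lemma evr_add:
  assumes "evr s f a" "evr s g b" shows "evr s (f + g) (a + b)"
proof -
  have *: "f + g = Fract (rnum f * rden g + rnum g * rden f) (rden f * rden g)"
    by (subst fract_repr(1)[of f], subst fract_repr(1)[of g]) (simp add: fract_repr(2))
  have d: "poly (cp (rden f)) s \<noteq> 0" "poly (cp (rden g)) s \<noteq> 0" using assms by (auto simp: evr_iff)
  have "evr s (f + g) (poly (cp (rnum f * rden g + rnum g * rden f)) s / poly (cp (rden f * rden g)) s)"
    unfolding * by (rule evr_Fract) (use d fract_repr(2) in \<open>auto simp: cp_mult\<close>)
  moreover have "poly (cp (rnum f * rden g + rnum g * rden f)) s / poly (cp (rden f * rden g)) s = a + b"
    using assms d by (simp add: evr_iff cp_mult cp_add field_simps)
  ultimately show ?thesis by simp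
qed

lemma evr_mult:
  assumes "evr s f a" "evr s g b" shows "evr s (f * g) (a * b)"
proof -
  have *: "f * g = Fract (rnum f * rnum g) (rden f * rden g)"
    by (subst fract_repr(1)[of f], subst fract_repr(1)[of g]) simp
  have d: "poly (cp (rden f)) s \<noteq> 0" "poly (cp (rden g)) s \<noteq> 0" using assms by (auto simp: evr_iff)
  have "evr s (f * g) (poly (cp (rnum f * rnum g)) s / poly (cp (rden f * rden g)) s)"
    unfolding * by (rule evr_Fract) (use d fract_repr(2) in \<open>auto simp: cp_mult\<close>)
  moreover have "poly (cp (rnum f * rnum g)) s / poly (cp (rden f * rden g)) s = a * b"
    using assms d by (simp add: evr_iff cp_mult field_simps)
  ultimately show ?thesis by simp
qed

lemma evr_uminus:
  assumes "evr s f a" shows "evr s (- f) (- a)"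
proof -
  have *: "- f = Fract (- rnum f) (rden f)"
    by (subst fract_repr(1)[of f]) simp
  have d: "poly (cp (rden f)) s \<noteq> 0" using assms by (auto simp: evr_iff)
  have "evr s (- f) (poly (cp (- rnum f)) s / poly (cp (rden f)) s)"
    unfolding * by (rule evr_Fract) (use d fract_repr(2) in auto)
  moreover have "poly (cp (- rnum f)) s / poly (cp (rden f)) s = - a"
    using assms d by (simp add: evr_iff cp_uminus)
  ultimately show ?thesis by simp
qed

lemma evr_0: "evr s 0 0" and evr_1: "evr s 1 1"
  by (simp_all add: evr_iff rnum_def rden_def)

lemma evr_divide:
  assumes "evr s f a" "evr s g b" "b \<noteq> 0" shows "evr s (f / g) (a / b)"
proof -
  have d: "poly (cp (rden f)) s \<noteq> 0" "poly (cp (rden g)) s \<noteq> 0" using assms by (auto simp: evr_iff)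
  have n: "poly (cp (rnum g)) s \<noteq> 0" using assms d by (auto simp: evr_iff)
  then have ng: "rnum g \<noteq> 0" by auto
  have *: "f / g = Fract (rnum f * rden g) (rden f * rnum g)"
    by (subst fract_repr(1)[of f], subst fract_repr(1)[of g]) simp
  have "evr s (f / g) (poly (cp (rnum f * rden g)) s / poly (cp (rden f * rnum g)) s)"
    unfolding * by (rule evr_Fract) (use d n ng fract_repr(2) in \<open>auto simp: cp_mult\<close>)
  moreover have "poly (cp (rnum f * rden g)) s / poly (cp (rden f * rnum g)) s = a / b"
    using assms d n by (simp add: evr_iff cp_mult field_simps)
  ultimately show ?thesis by simp
qed

lemma evr_sum:
  assumes "finite A" "\<And>x. x \<in> A \<Longrightarrow> evr s (f x) (g x)"
  shows "evr s (sum f A) (sum g A)"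
  using assms by (induction A rule: finite_induct) (auto intro: evr_add evr_0)

lemma evr_prod:
  assumes "finite A" "\<And>x. x \<in> A \<Longrightarrow> evr s (f x) (g x)"
  shows "evr s (prod f A) (prod g A)"
  using assms by (induction A rule: finite_induct) (auto intro: evr_mult evr_1)

lemma evr_sign: "evr s (of_int (sign p)) (of_int (sign p))"
  by (auto simp: sign_def intro: evr_uminus evr_1)

lemma evr_det:
  fixes M :: "real poly fract ^'n^'n" and A :: "complex^'n^'n"
  assumes "\<And>i j. evr s (M$i$j) (A$i$j)"
  shows "evr s (det M) (det A)"
  unfolding det_def
  by (intro evr_sum evr_mult evr_prod evr_sign assms) (auto simp: finite_permutations)



lemma rat_eval_holo:
  assumes "\<And>s. s \<in> S \<Longrightarrow> \<not> rat_pole f s"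
  shows "rat_eval f holomorphic_on S"
proof -
  have "(\<lambda>s. poly (cp (rnum f)) s / poly (cp (rden f)) s) holomorphic_on S"
    using assms unfolding rat_pole_def
    by (intro holomorphic_intros poly_holomorphic_on) auto
  then show ?thesis by (simp add: rat_eval_def[abs_def])
qed

lemma rat_eval_cont:
  assumes "\<And>s. s \<in> S \<Longrightarrow> \<not> rat_pole f s"
  shows "continuous_on S (rat_eval f)"
proof -
  have "rat_eval f holomorphic_on S" by (rule rat_eval_holo[OF assms])
  then show ?thesis by (rule holomorphic_on_imp_continuous_on)
qed

lemma degree_cp: "degree (cp p) = degree p"
  by (rule degree_map_poly) simp

lemma rat_eval_lim_inf:
  assumes "rat_proper f"
  shows "\<exists>L. (rat_eval f \<longlongrightarrow> L) at_infinity"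
proof -
  let ?a = "cp (rnum f)" and ?b = "cp (rden f)"
  have dle: "degree ?a \<le> degree ?b" using assms by (simp add: rat_proper_def degree_cp)
  have b0: "?b \<noteq> 0" using fract_repr(2)[of f] by (simp add: map_poly_eq_0_iff)
  have re: "rat_eval f = (\<lambda>x. poly ?a x / poly ?b x)" by (simp add: rat_eval_def[abs_def])
  show ?thesis
  proof (cases "degree ?a < degree ?b")
    case True
    then show ?thesis unfolding re using poly_divide_tendsto_0_at_infinity by blast
  next
    case False
    with dle have deq: "degree ?a = degree ?b" by simp
    have "((\<lambda>x. (poly ?a x / x ^ degree ?b) / (poly ?b x / x ^ degree ?b)) \<longlongrightarrow> lead_coeff ?a / lead_coeff ?b) at_infinity"
      using poly_divide_tendsto_aux[of ?a] poly_divide_tendsto_aux[of ?b] b0 deq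
      by (intro tendsto_divide) auto
    moreover have "\<forall>\<^sub>F x in at_infinity. (poly ?a x / x ^ degree ?b) / (poly ?b x / x ^ degree ?b) = poly ?a x / poly ?b x"
      by (rule eventually_at_infinityI[of 1]) auto
    ultimately have "((\<lambda>x. poly ?a x / poly ?b x) \<longlongrightarrow> lead_coeff ?a / lead_coeff ?b) at_infinity"
      by (rule Lim_transform_eventually)
    then show ?thesis unfolding re by blast
  qed
qed

lemma tf_eval_lim_inf:
  fixes G :: "real poly fract ^'n^'m"
  assumes "tf_proper G"
  shows "\<exists>L. (tf_eval G \<longlongrightarrow> L) at_infinity"
proof -
  have "\<forall>i j. \<exists>L. (rat_eval (G$i$j) \<longlongrightarrow> L) at_infinity"
    using assms rat_eval_lim_inf unfolding tf_proper_def by blast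
  then obtain L where L: "\<And>i j. (rat_eval (G$i$j) \<longlongrightarrow> L i j) at_infinity" by metis
  have "(tf_eval G \<longlongrightarrow> (\<chi> i j. L i j)) at_infinity"
    by (intro vec_tendstoI) (simp add: tf_eval_def L)
  then show ?thesis by blast
qed

lemma filterlim_imag_axis: "filterlim (\<lambda>\<omega>::real. \<i> * complex_of_real \<omega>) at_infinity at_top"
proof -
  have "filterlim (\<lambda>\<omega>::real. \<omega>) at_infinity at_top"
    by (simp add: filterlim_at_top_imp_at_infinity filterlim_ident)
  then have "filterlim (\<lambda>\<omega>::real. complex_of_real \<omega>) at_infinity at_top"
    unfolding filterlim_at_infinity_conv_norm_at_top by simp
  then show ?thesis
    unfolding filterlim_at_infinity_conv_norm_at_top by (simp add: norm_mult)
qed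

lemma tf_at_pinf_eq:
  fixes G :: "real poly fract ^'n^'m"
  assumes "(tf_eval G \<longlongrightarrow> L) at_infinity"
  shows "tf_at_pinf G = L"
proof -
  have "((\<lambda>\<omega>::real. tf_eval G (\<i> * complex_of_real \<omega>)) \<longlongrightarrow> L) at_top"
    using filterlim_compose[OF assms filterlim_imag_axis] by simp
  then show ?thesis unfolding tf_at_pinf_def by (intro tendsto_Lim) auto
qed



definition ip :: "complex^'n \<Rightarrow> complex^'n \<Rightarrow> complex" where
  "ip x y = (\<Sum>i\<in>UNIV. cnj (x $ i) * y $ i)"

lemma ip_bound: "\<bar>Re (ip x y)\<bar> \<le> norm x * norm y"
proof -
  have "\<bar>Re (ip x y)\<bar> \<le> norm (ip x y)" by (rule abs_Re_le_cmod)
  also have "\<dots> \<le> (\<Sum>i\<in>UNIV. norm (cnj (x $ i) * y $ i))" unfolding ip_def by (rule norm_sum)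
  also have "\<dots> = (\<Sum>i\<in>UNIV. \<bar>norm (x $ i)\<bar> * \<bar>norm (y $ i)\<bar>)" by (simp add: norm_mult)
  also have "\<dots> \<le> L2_set (\<lambda>i. norm (x $ i)) UNIV * L2_set (\<lambda>i. norm (y $ i)) UNIV"
    by (rule L2_set_mult_ineq)
  finally show ?thesis by (simp add: norm_vec_def)
qed

lemma ip_scaleR_left: "ip (t *\<^sub>R x) y = complex_of_real t * ip x y"
  unfolding ip_def vector_scaleR_component by (simp add: sum_distrib_left scaleR_conv_of_real mult.assoc)

lemma ip_uminus_right: "ip x (- y) = - ip x y"
  by (simp add: ip_def sum_negf)

lemma Re_ip_sym: "Re (ip x y) = Re (ip y x)"
proof -
  have "ip y x = cnj (ip x y)" by (simp add: ip_def mult.commute)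
  then show ?thesis by simp
qed

definition angset :: "complex^'n^'n \<Rightarrow> real set" where
  "angset A = {Re (\<Sum>i\<in>UNIV. cnj (x $ i) * (A *v x) $ i) / (norm x * norm (A *v x)) | x.
                   x \<noteq> 0 \<and> A *v x \<noteq> 0}"

lemma sangle_angset: "sangle A = (if A = 0 then 0 else arccos (Inf (angset A)))"
  by (simp add: sangle_def angset_def)

lemma angset_elem:
  assumes "x \<noteq> 0" "A *v x \<noteq> 0"
  shows "Re (ip x (A *v x)) / (norm x * norm (A *v x)) \<in> angset A"
  using assms unfolding angset_def ip_def by blast

lemma absdiv: "(P::real) > 0 \<Longrightarrow> \<bar>R\<bar> \<le> P \<Longrightarrow> -1 \<le> R / P \<and> R / P \<le> 1"
  by (auto simp: divide_le_eq le_divide_eq abs_le_iff)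

lemma angset_bounds:
  assumes "r \<in> angset A" shows "-1 \<le> r \<and> r \<le> 1"
proof -
  obtain x where x: "x \<noteq> 0" "A *v x \<noteq> 0" and r: "r = Re (ip x (A *v x)) / (norm x * norm (A *v x))"
    using assms unfolding angset_def ip_def by blast
  have p: "norm x * norm (A *v x) > 0" using x by simp
  show ?thesis unfolding r by (rule absdiv[OF p ip_bound])
qed

lemma angset_nonempty:
  assumes "A \<noteq> 0" shows "angset A \<noteq> {}"
proof -
  obtain i where i: "A $ i \<noteq> 0" using assms vec_eq_iff[of A 0] by auto
  obtain j where "A $ i $ j \<noteq> 0" using i vec_eq_iff[of "A $ i" 0] by auto
  moreover have "(A *v axis j 1) $ i = A $ i $ j"
  proof -
    have "(A *v axis j 1) $ i = (\<Sum>k\<in>UNIV. A $ i $ k * (if k = j then 1 else 0))"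
      by (simp add: matrix_vector_mult_def axis_def)
    also have "\<dots> = (\<Sum>k\<in>UNIV. if k = j then A $ i $ k else 0)"
      by (rule sum.cong) auto
    also have "\<dots> = A $ i $ j" by simp
    finally show ?thesis .
  qed
  ultimately have "A *v axis j 1 \<noteq> 0" by (metis zero_index)
  then show ?thesis using angset_elem[of "axis j 1" A] by (auto simp: axis_eq_0_iff)
qed

lemma Inf_angset:
  assumes "A \<noteq> 0"
  shows "-1 \<le> Inf (angset A)" "Inf (angset A) \<le> 1"
    "\<And>r. r \<in> angset A \<Longrightarrow> Inf (angset A) \<le> r"
proof -
  have ne: "angset A \<noteq> {}" by (rule angset_nonempty[OF assms])
  have bdd: "bdd_below (angset A)" using angset_bounds by (auto intro!: bdd_belowI[of _ "-1"])
  show "-1 \<le> Inf (angset A)" using ne angset_bounds by (intro cInf_greatest) auto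
  show le: "\<And>r. r \<in> angset A \<Longrightarrow> Inf (angset A) \<le> r" using bdd by (intro cInf_lower)
  obtain r where "r \<in> angset A" using ne by auto
  then show "Inf (angset A) \<le> 1" using le[of r] angset_bounds[of r A] by linarith
qed

lemma sangle_bounds: "0 \<le> sangle A \<and> sangle A \<le> pi"
  using Inf_angset[of A] by (auto simp: sangle_angset arccos_lbound arccos_ubound)

lemma scaleR_mv_left: "((t::real) *\<^sub>R (X::complex^'n^'m)) *v y = t *\<^sub>R (X *v y)"
  by (simp add: vec_eq_iff matrix_vector_mult_def scaleR_sum_right mult_scaleR_left)

lemma scaleR_mv_right: "(X::complex^'n^'m) *v ((t::real) *\<^sub>R y) = t *\<^sub>R (X *v y)"
  by (simp add: vec_eq_iff matrix_vector_mult_def scaleR_sum_right mult_scaleR_right)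

lemma aux_div: "(t::real) > 0 \<Longrightarrow> - t * r / (t * x) = - (r / x)"
  by (metis minus_divide_left mult_divide_mult_cancel_left_if mult_minus_left order_less_irrefl)

lemma angle_det:
  fixes A B :: "complex^'n^'n"
  assumes t: "t \<ge> 0" and ang: "sangle A + sangle B < pi"
  shows "det (mat 1 + t *\<^sub>R (A ** B)) \<noteq> 0"
proof
  assume d0: "det (mat 1 + t *\<^sub>R (A ** B)) = 0"
  define M where "M = mat 1 + t *\<^sub>R (A ** B)"
  have "\<not> inj ((*v) M)"
    using det_nz_iff_inj_gen[OF matrix_vector_mul_linear_gen[of M]] d0
    by (simp add: matrix_of_matrix_vector_mul M_def)
  then obtain x1 x2 where "x1 \<noteq> x2" "M *v x1 = M *v x2" unfolding inj_def by blast
  then obtain y where y0: "y \<noteq> 0" and My: "M *v y = 0"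
    by (metis eq_iff_diff_eq_0 matrix_vector_mult_diff_distrib)
  have sc: "(t *\<^sub>R (A ** B)) *v y = t *\<^sub>R (A *v (B *v y))"
    by (simp add: scaleR_mv_left matrix_vector_mul_assoc)
  have "M *v y = y + (t *\<^sub>R (A ** B)) *v y" unfolding M_def
    by (simp only: matrix_vector_mult_add_rdistrib matrix_vector_mul_lid)
  with My sc have My': "y + t *\<^sub>R (A *v (B *v y)) = 0" by simp
  define v where "v = B *v y"
  define u where "u = t *\<^sub>R v"
  have tpos: "t > 0" using My' y0 t by (cases "t = 0") auto
  have v0: "v \<noteq> 0" using My' y0 unfolding v_def by auto
  have tAv: "t *\<^sub>R (A *v v) = - y" using My' by (simp add: v_def eq_neg_iff_add_eq_0 add.commute)
  have Au: "A *v u = - y" unfolding u_def using tAv by (simp add: scaleR_mv_right)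
  have u0: "u \<noteq> 0" using tpos v0 unfolding u_def by simp
  have Au0: "A *v u \<noteq> 0" using Au y0 by simp
  have A0: "A \<noteq> 0" using Au0 by auto
  have B0: "B \<noteq> 0" using v0 unfolding v_def by auto
  have r1: "Re (ip u (A *v u)) / (norm u * norm (A *v u)) = - (Re (ip v y) / (norm v * norm y))"
  proof -
    have "Re (ip u (A *v u)) = Re (ip u (- y))" using Au by simp
    also have "\<dots> = - t * Re (ip v y)" by (simp add: u_def ip_uminus_right ip_scaleR_left)
    finally have e1: "Re (ip u (A *v u)) = - t * Re (ip v y)" .
    have "norm u * norm (A *v u) = norm u * norm y" using Au by simp
    also have "\<dots> = t * (norm v * norm y)" using tpos by (simp add: u_def)
    finally have e2: "norm u * norm (A *v u) = t * (norm v * norm y)" .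
    show ?thesis unfolding e1 e2 using tpos by (rule aux_div)
  qed
  have r2: "Re (ip y (B *v y)) / (norm y * norm (B *v y)) = Re (ip v y) / (norm v * norm y)"
    unfolding v_def[symmetric] by (simp add: Re_ip_sym mult.commute)
  have cA: "Inf (angset A) \<le> - (Re (ip v y) / (norm v * norm y))"
    using Inf_angset(3)[OF A0 angset_elem[OF u0 Au0]] r1 by simp
  have cB: "Inf (angset B) \<le> Re (ip v y) / (norm v * norm y)"
    using Inf_angset(3)[OF B0 angset_elem[OF y0, of B]] r2 v0 unfolding v_def by simp
  have le: "Inf (angset A) \<le> - Inf (angset B)" using cA cB by linarith
  have "arccos (- Inf (angset B)) \<le> arccos (Inf (angset A))"
    using Inf_angset[OF A0] Inf_angset[OF B0] le by (intro arccos_le_arccos) auto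
  moreover have "arccos (- Inf (angset B)) = pi - arccos (Inf (angset B))"
    using Inf_angset[OF B0] by (intro arccos_minus) auto
  ultimately have "sangle A + sangle B \<ge> pi" using A0 B0 by (simp add: sangle_angset)
  with ang show False by simp
qed



lemma unif_lim_param:
  fixes G :: "real \<times> complex \<Rightarrow> complex"
  assumes cont: "continuous_on ({0..1} \<times> K) G" and K: "compact K"
    and tk: "tk \<longlonglongrightarrow> \<tau>" and tk01: "\<And>k. tk k \<in> {0..1}" and tau: "\<tau> \<in> {0..1}"
  shows "uniform_limit K (\<lambda>k z. G (tk k, z)) (\<lambda>z. G (\<tau>, z)) sequentially"
proof -
  have uc: "uniformly_continuous_on ({0..1} \<times> K) G"
    by (rule compact_uniformly_continuous[OF cont]) (intro compact_Times compact_Icc K)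
  show ?thesis unfolding uniform_limit_iff
  proof (intro allI impI)
    fix e :: real assume e: "e > 0"
    obtain d where d: "d > 0" and dd: "\<And>x x'. x \<in> {0..1} \<times> K \<Longrightarrow> x' \<in> {0..1} \<times> K \<Longrightarrow> dist x' x < d \<Longrightarrow> dist (G x') (G x) < e"
      using uc e unfolding uniformly_continuous_on_def by metis
    have "\<forall>\<^sub>F k in sequentially. dist (tk k) \<tau> < d" using tk d by (rule tendstoD)
    then show "\<forall>\<^sub>F k in sequentially. \<forall>z\<in>K. dist (G (tk k, z)) (G (\<tau>, z)) < e"
    proof (rule eventually_mono)
      fix k assume k: "dist (tk k) \<tau> < d"
      show "\<forall>z\<in>K. dist (G (tk k, z)) (G (\<tau>, z)) < e"
      proof
        fix z assume z: "z \<in> K"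
        have "dist (tk k, z) (\<tau>, z) = dist (tk k) \<tau>" by (simp add: dist_Pair_Pair)
        then show "dist (G (tk k, z)) (G (\<tau>, z)) < e"
          using dd[of "(\<tau>, z)" "(tk k, z)"] z tk01[of k] tau k by auto
      qed
    qed
  qed
qed

lemma core_homotopy:
  fixes F :: "real \<Rightarrow> complex \<Rightarrow> complex"
  assumes cont: "continuous_on ({0..1} \<times> {s. 0 \<le> Re s}) (\<lambda>p. F (fst p) (snd p))"
    and holo: "\<And>t. t \<in> {0..1} \<Longrightarrow> F t holomorphic_on {s. 0 < Re s}"
    and F0: "\<And>s. 0 \<le> Re s \<Longrightarrow> F 0 s \<noteq> 0"
    and axis: "\<And>t s. t \<in> {0..1} \<Longrightarrow> Re s = 0 \<Longrightarrow> F t s \<noteq> 0"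
    and far: "\<And>t s. t \<in> {0..1} \<Longrightarrow> 0 \<le> Re s \<Longrightarrow> R \<le> norm s \<Longrightarrow> F t s \<noteq> 0"
    and s0: "0 \<le> Re s0"
  shows "F 1 s0 \<noteq> 0"
proof
  assume F1: "F 1 s0 = 0"
  define G where "G = (\<lambda>p. F (fst p) (snd p))"
  define K where "K = {s. 0 \<le> Re s} \<inter> cball 0 R"
  have "compact (cball 0 R \<inter> {s. 0 \<le> Re s})" by (intro compact_Int_closed compact_cball closed_halfspace_Re_ge)
  then have Kc: "compact K" unfolding K_def by (simp add: Int_commute)
  have KH: "K \<subseteq> {s. 0 \<le> Re s}" unfolding K_def by auto
  define Z where "Z = {p \<in> {0..1} \<times> K. G p = 0}"
  have contK: "continuous_on ({0..1} \<times> K) G"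
    using cont unfolding G_def by (rule continuous_on_subset) (use KH in auto)
  have "closed Z" unfolding Z_def
    by (rule continuous_closed_preimage_constant[OF contK]) (intro closed_Times closed_atLeastAtMost compact_imp_closed[OF Kc])
  then have "compact (({0..1} \<times> K) \<inter> Z)" by (intro compact_Int_closed compact_Times compact_Icc Kc)
  moreover have "({0..1} \<times> K) \<inter> Z = Z" unfolding Z_def by auto
  ultimately have Zc: "compact Z" by simp
  have "compact (fst ` Z)" by (intro compact_continuous_image continuous_intros Zc)
  moreover have "\<not> R \<le> norm s0" using far[of 1 s0] F1 s0 by auto
  then have s0K: "s0 \<in> K" using s0 unfolding K_def by auto
  then have "(1, s0) \<in> Z" unfolding Z_def G_def using F1 by auto
  then have "fst ` Z \<noteq> {}" by auto
  ultimately obtain \<tau> where \<tau>Z: "\<tau> \<in> fst ` Z" and \<tau>min: "\<And>t. t \<in> fst ` Z \<Longrightarrow> \<tau> \<le> t"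
    using compact_attains_inf by metis
  then obtain s1 where s1: "(\<tau>, s1) \<in> Z" by force
  have \<tau>01: "\<tau> \<in> {0..1}" and s1K: "s1 \<in> K" and Fs1: "F \<tau> s1 = 0"
    using s1 unfolding Z_def G_def by auto
  have \<tau>0: "\<tau> > 0"
  proof (rule ccontr)
    assume "\<not> \<tau> > 0" then have "\<tau> = 0" using \<tau>01 by auto
    then show False using F0[of s1] Fs1 s1K KH by auto
  qed
  have s1pos: "0 < Re s1"
  proof -
    have "Re s1 \<noteq> 0" using axis[OF \<tau>01] Fs1 by auto
    then show ?thesis using s1K KH by force
  qed
  have below: "F t s \<noteq> 0" if t: "0 \<le> t" "t < \<tau>" and s: "0 < Re s" for t s
  proof
    assume Fts: "F t s = 0"
    have t01: "t \<in> {0..1}" using t \<tau>01 by auto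
    have "\<not> R \<le> norm s" using far[OF t01, of s] Fts s by auto
    then have "s \<in> K" using s unfolding K_def by auto
    then have "(t, s) \<in> Z" unfolding Z_def G_def using Fts t01 by auto
    then have "\<tau> \<le> t" using \<tau>min by force
    with t show False by simp
  qed
  define tk where "tk = (\<lambda>k::nat. \<tau> - \<tau> / real (k + 2))"
  have tk_lim: "tk \<longlonglongrightarrow> \<tau>"
  proof -
    have "(\<lambda>k. \<tau> / real (k + 2)) \<longlonglongrightarrow> 0"
      using LIMSEQ_ignore_initial_segment[OF lim_const_over_n[of \<tau>], of 2] by simp
    then have "(\<lambda>k. \<tau> - \<tau> / real (k + 2)) \<longlonglongrightarrow> \<tau> - 0" by (intro tendsto_intros)
    then show ?thesis unfolding tk_def by simp
  qed
  have tk_bounds: "0 \<le> tk k \<and> tk k < \<tau>" for k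
  proof -
    have "\<tau> / real (k + 2) \<le> \<tau> / 2" using \<tau>0 by (intro divide_left_mono) auto
    moreover have "\<tau> / real (k + 2) > 0" using \<tau>0 by simp
    ultimately show ?thesis unfolding tk_def using \<tau>0 by linarith
  qed
  have tk01: "tk k \<in> {0..1}" for k using tk_bounds[of k] \<tau>01 by auto
  define S where "S = {s. 0 < Re s}"
  define R' where "R' = \<bar>R\<bar> + 1"
  have farpt: "F \<tau> (complex_of_real R') \<noteq> 0"
    using far[OF \<tau>01, of "complex_of_real R'"] unfolding R'_def by auto
  have "F \<tau> s1 \<noteq> 0"
  proof (rule Hurwitz_no_zeros[of S "\<lambda>k. F (tk k)" "F \<tau>"])
    show "open S" unfolding S_def by (rule open_halfspace_Re_gt)
    show "connected S" unfolding S_def by (rule convex_connected, rule convex_halfspace_Re_gt)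
    show "F (tk k) holomorphic_on S" for k unfolding S_def by (rule holo[OF tk01])
    show "F \<tau> holomorphic_on S" unfolding S_def by (rule holo[OF \<tau>01])
    show "uniform_limit K' (\<lambda>k. F (tk k)) (F \<tau>) sequentially" if "compact K'" "K' \<subseteq> S" for K'
    proof -
      have "continuous_on ({0..1} \<times> K') G"
        using cont unfolding G_def by (rule continuous_on_subset) (use that in \<open>auto simp: S_def\<close>)
      from unif_lim_param[OF this that(1) tk_lim tk01 \<tau>01] show ?thesis by (simp add: G_def)
    qed
    show "\<not> F \<tau> constant_on S"
    proof
      assume "F \<tau> constant_on S"
      then obtain c where c: "\<And>z. z \<in> S \<Longrightarrow> F \<tau> z = c" unfolding constant_on_def by blast
      have "c = 0" using c[of s1] Fs1 s1pos unfolding S_def by auto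
      moreover have "F \<tau> (complex_of_real R') = c" using c[of "complex_of_real R'"] unfolding S_def R'_def
        by (simp add: add_nonneg_pos)
      ultimately show False using farpt by simp
    qed
    show "F (tk k) z \<noteq> 0" if "z \<in> S" for k z using below[of "tk k" z] tk_bounds[of k] that unfolding S_def by auto
    show "s1 \<in> S" using s1pos unfolding S_def by simp
  qed
  with Fs1 show False by simp
qed




lemma continuous_on_vec_nth':
  fixes f :: "'a::topological_space \<Rightarrow> 'b::topological_space^'n"
  assumes "continuous_on S f" shows "continuous_on S (\<lambda>x. f x $ i)"
  using assms unfolding continuous_on_def by (auto intro: tendsto_vec_nth)

lemma cont_det:
  fixes M :: "'a::topological_space \<Rightarrow> complex^'n^'n"
  assumes "\<And>i j. continuous_on X (\<lambda>x. M x $ i $ j)"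
  shows "continuous_on X (\<lambda>x. det (M x))"
  unfolding det_def by (intro continuous_intros continuous_on_prod assms)

lemma holo_det:
  fixes M :: "complex \<Rightarrow> complex^'n^'n"
  assumes "\<And>i j. (\<lambda>x. M x $ i $ j) holomorphic_on X"
  shows "(\<lambda>x. det (M x)) holomorphic_on X"
  unfolding det_def by (intro holomorphic_intros holomorphic_on_prod assms)

lemma entry_formula:
  fixes X Y :: "complex^'n^'n"
  shows "(mat 1 + t *\<^sub>R (X ** Y)) $ i $ j = (if i = j then 1 else 0) + complex_of_real t * (\<Sum>k\<in>UNIV. X $ i $ k * Y $ k $ j)"
  unfolding vector_add_component vector_scaleR_component by (simp add: mat_def matrix_matrix_mult_def scaleR_conv_of_real)

lemma hinf_bounds:
  fixes G :: "real poly fract ^'n^'n"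
  shows "sangle (tf_eval G (\<i> * complex_of_real \<omega>)) \<le> hinf_angle G"
    and "sangle (tf_at_pinf G) \<le> hinf_angle G"
proof -
  let ?S = "{sangle (tf_eval G (\<i> * complex_of_real \<omega>)) | \<omega>. True} \<union> {sangle (tf_at_pinf G), sangle (tf_at_minf G)}"
  have bdd: "bdd_above ?S" using sangle_bounds by (intro bdd_aboveI[of _ pi]) blast
  show "sangle (tf_eval G (\<i> * complex_of_real \<omega>)) \<le> hinf_angle G"
    unfolding hinf_angle_def by (rule cSup_upper[OF _ bdd]) blast
  show "sangle (tf_at_pinf G) \<le> hinf_angle G"
    unfolding hinf_angle_def by (rule cSup_upper[OF _ bdd]) blast
qed

lemma evr_tf:
  fixes G :: "real poly fract ^'n^'m"
  assumes "tf_no_crhp_poles G" "0 \<le> Re s"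
  shows "evr s (G $ i $ j) (tf_eval G s $ i $ j)"
  using assms unfolding tf_no_crhp_poles_def tf_poles_def evr_def tf_eval_def by auto

lemma matrix_inv_right:
  fixes M :: "'a::field^'n^'n"
  assumes "invertible M" shows "M ** matrix_inv M = mat 1"
proof -
  have "\<exists>A'. M ** A' = mat 1 \<and> A' ** M = mat 1" using assms unfolding invertible_def .
  then show ?thesis unfolding matrix_inv_def by (rule someI2_ex) auto
qed

theorem corollary3:
  fixes P C :: "real poly fract ^'n^'n"
  assumes "tf_proper P" and "tf_proper C"
    and "tf_no_crhp_poles P" and "tf_no_crhp_poles C"
    and "well_posed P C"
    and "hinf_angle P + hinf_angle C < pi"
  shows "tf_proper (matrix_inv (mat 1 + C ** P)) \<and> tf_no_crhp_poles (matrix_inv (mat 1 + C ** P))"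
proof
  show "tf_proper (matrix_inv (mat 1 + C ** P))" using assms(5) unfolding well_posed_def by simp
  define H where "H = {s::complex. 0 \<le> Re s}"
  define F where "F = (\<lambda>t s. det (mat 1 + t *\<^sub>R (tf_eval C s ** tf_eval P s)))"
  have angsum: "sangle A + sangle B < pi" if "sangle A \<le> hinf_angle C" "sangle B \<le> hinf_angle P" for A B :: "complex^'n^'n"
    using that assms(6) by linarith
  have nopoleC: "\<And>s i j. s \<in> H \<Longrightarrow> \<not> rat_pole (C $ i $ j) s"
    using assms(4) unfolding tf_no_crhp_poles_def tf_poles_def H_def by auto
  have nopoleP: "\<And>s i j. s \<in> H \<Longrightarrow> \<not> rat_pole (P $ i $ j) s"
    using assms(3) unfolding tf_no_crhp_poles_def tf_poles_def H_def by auto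
  have contC: "continuous_on H (rat_eval (C $ i $ j))" for i j by (rule rat_eval_cont[OF nopoleC])
  have contP: "continuous_on H (rat_eval (P $ i $ j))" for i j by (rule rat_eval_cont[OF nopoleP])
  have cont: "continuous_on ({0..1} \<times> {s. 0 \<le> Re s}) (\<lambda>p. F (fst p) (snd p))"
    unfolding F_def H_def[symmetric]
  proof (rule cont_det)
    fix i j
    have c1: "continuous_on ({0..1} \<times> H) (\<lambda>p. rat_eval (C $ i $ k) (snd p))" for k
      by (rule continuous_on_compose2[OF contC continuous_on_snd]) auto
    have c2: "continuous_on ({0..1} \<times> H) (\<lambda>p. rat_eval (P $ k $ j) (snd p))" for k
      by (rule continuous_on_compose2[OF contP continuous_on_snd]) auto
    show "continuous_on ({0..1} \<times> H) (\<lambda>p. (mat 1 + fst p *\<^sub>R (tf_eval C (snd p) ** tf_eval P (snd p))) $ i $ j)"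
      unfolding entry_formula tf_eval_def vec_lambda_beta by (intro continuous_intros c1 c2)
  qed
  have holo: "F t holomorphic_on {s. 0 < Re s}" for t
    unfolding F_def
  proof (rule holo_det)
    fix i j
    have h1: "rat_eval (C $ i $ k) holomorphic_on {s. 0 < Re s}" for k
      by (rule rat_eval_holo) (use nopoleC in \<open>auto simp: H_def\<close>)
    have h2: "rat_eval (P $ k $ j) holomorphic_on {s. 0 < Re s}" for k
      by (rule rat_eval_holo) (use nopoleP in \<open>auto simp: H_def\<close>)
    show "(\<lambda>s. (mat 1 + t *\<^sub>R (tf_eval C s ** tf_eval P s)) $ i $ j) holomorphic_on {s. 0 < Re s}"
      unfolding entry_formula tf_eval_def vec_lambda_beta by (intro holomorphic_intros h1 h2)
  qed
  have F0: "F 0 s \<noteq> 0" for s unfolding F_def by simp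
  have axis: "F t s \<noteq> 0" if t: "t \<in> {0..1}" and s: "Re s = 0" for t s
  proof -
    have seq: "s = \<i> * complex_of_real (Im s)" using s by (simp add: complex_eq_iff)
    have "sangle (tf_eval C s) + sangle (tf_eval P s) < pi"
      using angsum[OF hinf_bounds(1)[of C "Im s"] hinf_bounds(1)[of P "Im s"]] unfolding seq[symmetric] .
    then show ?thesis unfolding F_def using t by (intro angle_det) auto
  qed
  obtain Lc where Lc: "(tf_eval C \<longlongrightarrow> Lc) at_infinity" using tf_eval_lim_inf[OF assms(2)] by blast
  obtain Lp where Lp: "(tf_eval P \<longlongrightarrow> Lp) at_infinity" using tf_eval_lim_inf[OF assms(1)] by blast
  have LcE: "tf_at_pinf C = Lc" by (rule tf_at_pinf_eq[OF Lc])
  have LpE: "tf_at_pinf P = Lp" by (rule tf_at_pinf_eq[OF Lp])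
  define Ginf where "Ginf = Lc ** Lp"
  have Glim: "((\<lambda>s. tf_eval C s ** tf_eval P s) \<longlongrightarrow> Ginf) at_infinity"
    unfolding Ginf_def
  proof (intro vec_tendstoI)
    fix i j
    show "((\<lambda>s. (tf_eval C s ** tf_eval P s) $ i $ j) \<longlongrightarrow> (Lc ** Lp) $ i $ j) at_infinity"
      unfolding matrix_matrix_mult_def vec_lambda_beta
      by (intro tendsto_intros tendsto_vec_nth Lc Lp)
  qed
  define D where "D = (\<lambda>p::real \<times> (complex^'n^'n). det (mat 1 + fst p *\<^sub>R snd p))"
  have contD: "continuous_on UNIV D" unfolding D_def
  proof (rule cont_det)
    fix i j
    have "continuous_on UNIV (\<lambda>p::real \<times> (complex^'n^'n). snd p $ i $ j)"
      by (intro continuous_on_vec_nth' continuous_on_snd continuous_on_id)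
    then show "continuous_on UNIV (\<lambda>p::real \<times> (complex^'n^'n). (mat 1 + fst p *\<^sub>R snd p) $ i $ j)"
    proof -
      have eq: "(mat 1 + fst p *\<^sub>R snd p) $ i $ j = (if i = j then 1 else 0) + complex_of_real (fst p) * snd p $ i $ j"
        for p :: "real \<times> (complex^'n^'n)"
        unfolding vector_add_component vector_scaleR_component by (simp add: mat_def scaleR_conv_of_real)
      show ?thesis unfolding eq by (intro continuous_intros \<open>continuous_on UNIV (\<lambda>p::real \<times> (complex^'n^'n). snd p $ i $ j)\<close>)
    qed
  qed
  define Zs where "Zs = {p \<in> {0..1::real} \<times> (UNIV :: (complex^'n^'n) set). D p = 0}"
  have "closed Zs" unfolding Zs_def
    by (rule continuous_closed_preimage_constant) (use contD in \<open>auto intro: continuous_on_subset closed_Times\<close>)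
  moreover have "compact ({0..1::real} \<times> {Ginf})" by (intro compact_Times compact_Icc compact_sing)
  moreover have "({0..1::real} \<times> {Ginf}) \<inter> Zs = {}"
  proof -
    have "D (t, Ginf) \<noteq> 0" if "t \<in> {0..1}" for t
      unfolding D_def Ginf_def using that
      by (simp, intro angle_det) (auto intro!: angsum hinf_bounds(2)[of C, unfolded LcE] hinf_bounds(2)[of P, unfolded LpE])
    then show ?thesis unfolding Zs_def by auto
  qed
  ultimately obtain \<delta> where \<delta>: "\<delta> > 0" and \<delta>sep: "\<And>x y. x \<in> {0..1} \<times> {Ginf} \<Longrightarrow> y \<in> Zs \<Longrightarrow> \<delta> \<le> dist x y"
    using separate_compact_closed[of "{0..1::real} \<times> {Ginf}" Zs] by metis
  have "\<forall>\<^sub>F s in at_infinity. dist (tf_eval C s ** tf_eval P s) Ginf < \<delta>"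
    using Glim \<delta> by (rule tendstoD)
  then obtain R where R: "\<And>s. R \<le> norm s \<Longrightarrow> dist (tf_eval C s ** tf_eval P s) Ginf < \<delta>"
    unfolding eventually_at_infinity by blast
  have far: "F t s \<noteq> 0" if t: "t \<in> {0..1}" and "0 \<le> Re s" and sR: "R \<le> norm s" for t s
  proof
    assume "F t s = 0"
    then have "(t, tf_eval C s ** tf_eval P s) \<in> Zs" unfolding Zs_def D_def F_def using t by simp
    then have "\<delta> \<le> dist (t, Ginf) (t, tf_eval C s ** tf_eval P s)" using \<delta>sep t by blast
    moreover have "dist (t, Ginf) (t, tf_eval C s ** tf_eval P s) = dist (tf_eval C s ** tf_eval P s) Ginf"
      by (simp add: dist_Pair_Pair dist_commute)
    ultimately show False using R[OF sR] by simp
  qed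
  have Fnz: "F 1 s \<noteq> 0" if "0 \<le> Re s" for s
    by (rule core_homotopy[OF cont holo F0 axis far that]) auto
  show "tf_no_crhp_poles (matrix_inv (mat 1 + C ** P))"
    unfolding tf_no_crhp_poles_def tf_poles_def
  proof (intro allI impI, clarsimp)
    fix s k j
    assume s: "0 \<le> Re s" and pole: "rat_pole (matrix_inv (mat 1 + C ** P) $ k $ j) s"
    define M where "M = mat 1 + C ** P"
    define N where "N = matrix_inv M"
    define Me where "Me = mat 1 + tf_eval C s ** tf_eval P s"
    have inv: "invertible M" using assms(5) unfolding well_posed_def M_def by simp
    have dM: "det M \<noteq> 0" using inv invertible_det_nz by blast
    have MN: "M ** N = mat 1" unfolding N_def by (rule matrix_inv_right[OF inv])
    have evM: "evr s (M $ a $ b) (Me $ a $ b)" for a b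
    proof -
      have "evr s ((if a = b then 1 else 0) + (\<Sum>l\<in>UNIV. C $ a $ l * P $ l $ b))
              ((if a = b then 1 else 0) + (\<Sum>l\<in>UNIV. tf_eval C s $ a $ l * tf_eval P s $ l $ b))"
        by (intro evr_add evr_sum evr_mult evr_tf assms(3,4) s) (auto simp: evr_0 evr_1)
      then show ?thesis unfolding M_def Me_def by (simp add: mat_def matrix_matrix_mult_def)
    qed
    have "Me = mat 1 + 1 *\<^sub>R (tf_eval C s ** tf_eval P s)" unfolding Me_def by simp
    then have dMe: "det Me \<noteq> 0" using Fnz[OF s] unfolding F_def by simp
    have evD: "evr s (det M) (det Me)" by (rule evr_det[OF evM])
    define x where "x = (\<chi> l. N $ l $ j)"
    define b where "b = (\<chi> i. (mat 1 :: real poly fract^'n^'n) $ i $ j)"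
    have "M *v x = b"
      unfolding x_def b_def MN[symmetric] by (simp add: vec_eq_iff matrix_vector_mult_def matrix_matrix_mult_def)
    then have xe: "x = (\<chi> k. det (\<chi> i j'. if j' = k then b $ i else M $ i $ j') / det M)"
      using cramer[OF dM] by blast
    have Nkj: "N $ k $ j = det (\<chi> i j'. if j' = k then b $ i else M $ i $ j') / det M"
      using arg_cong[OF xe, of "\<lambda>v. v $ k"] unfolding x_def by simp
    have evB: "evr s ((\<chi> i j'. if j' = k then b $ i else M $ i $ j') $ a $ c)
                     ((\<chi> i j'. if j' = k then (mat 1 :: complex^'n^'n) $ i $ j else Me $ i $ j') $ a $ c)" for a c
      using evM[of a c] by (auto simp: b_def mat_def evr_0 evr_1)
    have "evr s (N $ k $ j) (det (\<chi> i j'. if j' = k then (mat 1 :: complex^'n^'n) $ i $ j else Me $ i $ j') / det Me)"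
      unfolding Nkj by (rule evr_divide[OF evr_det[OF evB] evD dMe])
    then show False using pole unfolding evr_def N_def M_def by simp
  qed
qed


end
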